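(* Let $r_1\ge\cdots\ge r_k\ge0$, let $M_1$ map $r_{1:k}=(r_1,\ldots,r_k)$ to $R_{1:k}=(R_1,\ldots,R_k)$ with $R_\tau=\sum_{j=1}^kr_j^\tau$, and let $M_2$ map $R_{1:k}$ to $t_{1:k}=(t_1,\ldots,t_k)$ defined by $t_0=1$, $t_1=R_1$, and $t_\tau=\sum_{j=1}^\tau\frac{(\tau-1)!}{(\tau-j)!}2^{j-1}R_jt_{\tau-j}$ for $\tau=2,\ldots,k$. Then: (1) The inverse $r_{1:k}=M_1^{-1}(R_{1:k})$ exists, i.e. $r_{1:k}$ is uniquely determined by $R_{1:k}$. Explicitly, let $a_k=R_1$ and $a_{k-j+1}=(R_j-\sum_{i=1}^{j-1}R_ia_{k-j+i+1})/j$ for $j=2,\ldots,k$, and let $A$ be the $k\times k$ matrix whose first $k-1$ rows are $[\,0_{k-1}\mid I_{k-1}\,]$ and whose last row is $(a_1,a_2,\ldots,a_k)$. Then $r_j$ is the $j$th largest modulus of the eigenvalues of $A$, $j=1,\ldots,k$. (2) The inverse $R_{1:k}=M_2^{-1}(t_{1:k})$ exists and is given by $R_1=t_1$ and $R_\tau=\frac{t_\tau}{(\tau-1)!2^{\tau-1}}-\sum_{j=1}^{\tau-1}\frac{t_{\tau-j}R_j}{(\tau-j)!2^{\tau-j}}$ for $\tau=2,\ldots,k$.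
   Context: $0_{k-1}$ denotes the zero column vector of length $k-1$ and $I_{k-1}$ the $(k-1)\times(k-1)$ identity matrix. In the paper, $r_1\ge\cdots\ge r_k$ are the odds of missing information $r_j=f_j/(1-f_j)$ where $f_1\ge\cdots\ge f_k$ are the eigenvalues (in $[0,1)$) of $I_{mis}I_{com}^{-1}$; $t_\tau$ is the $\tau$th moment of $\sum_j r_jU_j$ with $U_j\sim\chi^2_1$ independent. *)

theory Defs
  imports "Jordan_Normal_Form.Char_Poly" "HOL-Library.Multiset"
begin

text \<open>Vectors r, R, t of length k are represented as functions nat => real,
  only the entries with indices 1..k being relevant.\<close>

definition power_sum :: "nat \<Rightarrow> (nat \<Rightarrow> real) \<Rightarrow> nat \<Rightarrow> real" where
  "power_sum k r \<tau> = (\<Sum>j=1..k. r j ^ \<tau>)"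

fun moment_t :: "(nat \<Rightarrow> real) \<Rightarrow> nat \<Rightarrow> real" where
  "moment_t R 0 = 1"
| "moment_t R (Suc n) =
     (\<Sum>j\<in>{1..Suc n}. fact n / fact (Suc n - j) * 2 ^ (j - 1) * R j * moment_t R (Suc n - j))"

fun inv_M2 :: "(nat \<Rightarrow> real) \<Rightarrow> nat \<Rightarrow> real" where
  "inv_M2 t 0 = 0"
| "inv_M2 t (Suc n) =
     (if n = 0 then t 1
      else t (Suc n) / (fact n * 2 ^ n)
           - (\<Sum>j\<in>{1..n}. t (Suc n - j) * inv_M2 t j / (fact (Suc n - j) * 2 ^ (Suc n - j))))"

text \<open>Auxiliary sequence b_j = a_{k-j+1}: b_1 = R_1,
  b_j = (R_j - sum_{i=1}^{j-1} R_i b_{j-i}) / j.  Indeed a_{k-j+i+1} = b_{j-i}.\<close>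
fun coeff_b :: "(nat \<Rightarrow> real) \<Rightarrow> nat \<Rightarrow> real" where
  "coeff_b R 0 = 0"
| "coeff_b R (Suc n) =
     (if n = 0 then R 1
      else (R (Suc n) - (\<Sum>i\<in>{1..n}. R i * coeff_b R (Suc n - i))) / real (Suc n))"

definition coeff_a :: "nat \<Rightarrow> (nat \<Rightarrow> real) \<Rightarrow> nat \<Rightarrow> real" where
  "coeff_a k R m = coeff_b R (k + 1 - m)"

text \<open>The k x k matrix A (0-indexed): first k-1 rows [0_{k-1} | I_{k-1}],
  last row (a_1, ..., a_k); regarded as a complex matrix.\<close>
definition companion_A :: "nat \<Rightarrow> (nat \<Rightarrow> real) \<Rightarrow> complex mat" where
  "companion_A k R = mat k k (\<lambda>(i, j).
      if i < k - 1 then (if j = i + 1 then 1 else 0)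
      else complex_of_real (coeff_a k R (j + 1)))"

definition eigenvalue_mset :: "complex mat \<Rightarrow> complex multiset" where
  "eigenvalue_mset A = Abs_multiset (\<lambda>x. order x (char_poly A))"

definition eigen_moduli_desc :: "complex mat \<Rightarrow> real list" where
  "eigen_moduli_desc A = rev (sorted_list_of_multiset (image_mset cmod (eigenvalue_mset A)))"

definition jth_largest_eig_modulus :: "complex mat \<Rightarrow> nat \<Rightarrow> real" where
  "jth_largest_eig_modulus A j = eigen_moduli_desc A ! (j - 1)"

end

theory Submission
  imports Defs "HOL-Computational_Algebra.Formal_Power_Series"
begin


definition Efps :: "(nat \<Rightarrow> real) \<Rightarrow> nat set \<Rightarrow> real fps" where
  "Efps r J = (\<Prod>j\<in>J. 1 - fps_const (r j) * fps_X)"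

definition Sfps :: "(nat \<Rightarrow> real) \<Rightarrow> nat set \<Rightarrow> real fps" where
  "Sfps r J = Abs_fps (\<lambda>m. \<Sum>j\<in>J. r j ^ (m+1))"

lemma geom_aux: "(1 - fps_const c * fps_X) * Abs_fps (\<lambda>m. c ^ (m+1)) = fps_const (c::real)"
proof (rule fps_ext)
  fix n show "fps_nth ((1 - fps_const c * fps_X) * Abs_fps (\<lambda>m. c ^ (m+1))) n = fps_nth (fps_const c) n"
    by (cases n) (simp_all add: algebra_simps mult.assoc)
qed

lemma newton_fps:
  assumes "finite J"
  shows "fps_deriv (Efps r J) = - Efps r J * Sfps r J"
  using assms
proof (induction J rule: finite_induct)
  case empty
  then show ?case by (simp add: Efps_def Sfps_def fps_zero_def[symmetric])
next
  case (insert a J)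
  have S: "Sfps r (insert a J) = Abs_fps (\<lambda>m. r a ^ (m+1)) + Sfps r J"
    using insert by (simp add: Sfps_def fps_plus_def)
  have E: "Efps r (insert a J) = (1 - fps_const (r a) * fps_X) * Efps r J"
    using insert by (simp add: Efps_def)
  define c where "c = r a"
  define G where "G = Abs_fps (\<lambda>m. c ^ (m+1))"
  have g: "(1 - fps_const c * fps_X) * G = fps_const c" using geom_aux[of c] by (simp add: G_def)
  have d: "fps_deriv (1 - fps_const c * fps_X) = - fps_const c" by simp
  have "fps_deriv (Efps r (insert a J)) = - fps_const c * Efps r J + (1 - fps_const c * fps_X) * (- Efps r J * Sfps r J)"
    unfolding E fps_deriv_mult insert.IH d c_def by simp
  also have "\<dots> = - ((1 - fps_const c * fps_X) * G) * Efps r J - (1 - fps_const c * fps_X) * Efps r J * Sfps r J"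
    unfolding g by (simp add: algebra_simps)
  also have "\<dots> = - Efps r (insert a J) * Sfps r (insert a J)"
    unfolding S E G_def[symmetric] c_def[symmetric] by (simp add: algebra_simps)
  finally show ?case .
qed

lemma Efps0: "finite J \<Longrightarrow> fps_nth (Efps r J) 0 = 1"
  by (induction J rule: finite_induct) (simp_all add: Efps_def)

lemma newton_coeff:
  assumes "finite J"
  shows "of_nat (m+1) * fps_nth (Efps r J) (m+1) = - (\<Sum>i=0..m. fps_nth (Efps r J) i * (\<Sum>j\<in>J. r j ^ (m - i + 1)))"
proof -
  have "fps_nth (fps_deriv (Efps r J)) m = fps_nth (- Efps r J * Sfps r J) m"
    using newton_fps[OF assms] by simp
  then show ?thesis by (simp add: fps_mult_nth Sfps_def sum_negf)
qed

lemma E_coeff_b: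
  assumes "1 \<le> m"
  shows "fps_nth (Efps r {1..k}) m = - coeff_b (power_sum k r) m"
  using assms
proof (induction m rule: less_induct)
  case (less m)
  define E where "E = fps_nth (Efps r {1..k})"
  define R where "R = power_sum k r"
  obtain n where m: "m = Suc n" using less.prems by (cases m) auto
  have E0: "E 0 = 1" unfolding E_def by (simp add: Efps0)
  have rec: "real (n+1) * E (n+1) = - (\<Sum>i=0..n. E i * R (n - i + 1))"
    unfolding E_def R_def power_sum_def using newton_coeff[of "{1..k}" n r] by simp
  show ?case
  proof (cases "n = 0")
    case True
    then show ?thesis using rec E0 unfolding m E_def R_def by simp
  next
    case False
    have IH: "E i = - coeff_b R i" if "1 \<le> i" "i \<le> n" for i
      using less.IH[of i] that unfolding m E_def R_def by simp
    have "(\<Sum>i=0..n. E i * R (n - i + 1)) = R (n+1) + (\<Sum>i=1..n. E i * R (n - i + 1))"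
      using E0 by (simp add: sum.atLeast_Suc_atMost)
    also have "(\<Sum>i=1..n. E i * R (n - i + 1)) = - (\<Sum>i=1..n. coeff_b R i * R (n + 1 - i))"
      by (simp add: IH sum_negf[symmetric] Suc_diff_le)
    also have "(\<Sum>i=1..n. coeff_b R i * R (n + 1 - i)) = (\<Sum>i=1..n. R i * coeff_b R (n + 1 - i))"
      by (subst sum.atLeastAtMost_rev) (auto intro!: sum.cong simp: Suc_diff_le)
    finally have "real (n+1) * E (n+1) = - R (n+1) + (\<Sum>i=1..n. R i * coeff_b R (Suc n - i))"
      using rec by simp
    then have "E (n+1) = - ((R (Suc n) - (\<Sum>i=1..n. R i * coeff_b R (Suc n - i))) / real (Suc n))"
      by (simp add: field_simps)
    then show ?thesis using False unfolding m E_def R_def by simp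
  qed
qed

lemma Efps_Suc: "Efps r {1..Suc n} = (1 - fps_const (r (Suc n)) * fps_X) * Efps r {1..n}"
  unfolding Efps_def by (simp add: prod.cl_ivl_Suc mult.commute)

lemma nth_lin: "fps_nth ((1 - fps_const (c::real) * fps_X) * f) m = fps_nth f m - c * (if m = 0 then 0 else fps_nth f (m-1))"
proof -
  have "(1 - fps_const c * fps_X) * f = f - fps_const c * (fps_X * f)" by (simp add: left_diff_distrib mult.assoc)
  then show ?thesis by simp
qed

lemma E_high: "m > n \<Longrightarrow> fps_nth (Efps r {1..n}) m = 0"
proof (induction n arbitrary: m)
  case 0
  then show ?case by (simp add: Efps_def)
next
  case (Suc n)
  then show ?case unfolding Efps_Suc nth_lin by auto
qed

lemma coeff_lin: "coeff ([:a, 1:] * (p::'a::comm_ring_1 poly)) i = a * coeff p i + (if i = 0 then 0 else coeff p (i - 1))"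
  by (simp add: mult_pCons_left coeff_pCons split: nat.split)

lemma P_link:
  "coeff (\<Prod>j=1..n. [:- complex_of_real (r j), 1:]) i =
     (if i \<le> n then complex_of_real (fps_nth (Efps r {1..n}) (n - i)) else 0)"
proof (induction n arbitrary: i)
  case 0
  then show ?case by (simp add: Efps_def coeff_1 )
next
  case (Suc n)
  have P: "(\<Prod>j=1..Suc n. [:- complex_of_real (r j), 1:]) = [:- complex_of_real (r (Suc n)), 1:] * (\<Prod>j=1..n. [:- complex_of_real (r j), 1:])"
    by (simp add: prod.cl_ivl_Suc mult.commute)
  show ?case
    unfolding P coeff_lin Suc.IH Efps_Suc nth_lin
    using E_high[of n "Suc n" r]
    by (cases i) (auto simp: Suc_diff_le)
qed



definition CM :: "nat \<Rightarrow> (nat \<Rightarrow> 'a::comm_ring_1) \<Rightarrow> 'a poly mat" where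
  "CM n c = mat n n (\<lambda>(i,j). if i < n - 1 then (if j = i then [:0,1:] else if j = i+1 then -1 else 0)
      else (if j = n - 1 then [:0,1:] else 0) - [:c j:])"

lemma CM_carrier: "CM n c \<in> carrier_mat n n" by (simp add: CM_def)

lemma det_CM: "det (CM (Suc m) c) = monom 1 (Suc m) - (\<Sum>j<Suc m. [:c j:] * monom 1 j)"
proof (induction m arbitrary: c)
  case 0
  have "det (CM (Suc 0) c) = prod_list (diag_mat (CM (Suc 0) c))"
    by (rule det_upper_triangular[OF _ CM_carrier]) (auto simp: upper_triangular_def CM_def)
  also have "\<dots> = [:0,1:] - [:c 0:]" by (simp add: diag_mat_def CM_def)
  finally show ?case by (simp add: monom_Suc)
next
  case (Suc m)
  define A where "A = CM (Suc (Suc m)) c"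
  have Ac: "A \<in> carrier_mat (Suc (Suc m)) (Suc (Suc m))" unfolding A_def by (rule CM_carrier)
  have A00: "A $$ (0,0) = [:0,1:]" by (simp add: A_def CM_def)
  have Am0: "A $$ (Suc m,0) = - [:c 0:]" by (simp add: A_def CM_def)
  have Ai0: "A $$ (Suc i, 0) = 0" if "i < m" for i using that by (simp add: A_def CM_def)
  have del0: "mat_delete A 0 0 = CM (Suc m) (\<lambda>j. c (Suc j))"
    by (rule eq_matI) (auto simp: A_def CM_def mat_delete_def)
  define D where "D = mat_delete A (Suc m) 0"
  have Dc: "D \<in> carrier_mat (Suc m) (Suc m)" unfolding D_def using mat_delete_carrier[OF Ac] by simp
  have Dij: "D $$ (i,j) = (if Suc j = i then [:0,1:] else if j = i then -1 else 0)" if "i < Suc m" "j < Suc m" for i j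
    using that by (simp add: D_def A_def CM_def mat_delete_def)
  have "det D = det (transpose_mat D)" using det_transpose[OF Dc] by simp
  also have "\<dots> = prod_list (diag_mat (transpose_mat D))"
    by (rule det_upper_triangular[of _ "Suc m"]) (use Dc Dij in \<open>auto simp: upper_triangular_def\<close>)
  also have "\<dots> = (\<Prod>i=0..<Suc m. -1)"
    unfolding prod_list_diag_prod using Dc Dij by (intro prod.cong) auto
  finally have detD: "det D = (-1) ^ Suc m" by simp
  have "det A = (\<Sum>i<Suc (Suc m). A $$ (i,0) * cofactor A i 0)"
    by (rule laplace_expansion_column[OF Ac]) simp
  also have "\<dots> = A $$ (Suc m,0) * cofactor A (Suc m) 0 + A $$ (0,0) * cofactor A 0 0
        + (\<Sum>i<m. A $$ (Suc i,0) * cofactor A (Suc i) 0)"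
    apply (subst sum.lessThan_Suc)
    apply (subst sum.lessThan_Suc_shift)
    by (simp add: algebra_simps)
  also have "(\<Sum>i<m. A $$ (Suc i,0) * cofactor A (Suc i) 0) = 0" by (simp add: Ai0)
  also have "cofactor A 0 0 = det (CM (Suc m) (\<lambda>j. c (Suc j)))" by (simp add: cofactor_def del0)
  also have "cofactor A (Suc m) 0 = (-1) ^ Suc m * (-1) ^ Suc m" by (simp add: cofactor_def detD D_def[symmetric])
  finally have "det A = - [:c 0:] + [:0,1:] * (monom 1 (Suc m) - (\<Sum>j<Suc m. [:c (Suc j):] * monom 1 j))"
    unfolding Am0 A00 Suc.IH by (simp flip: power_add)
  also have "\<dots> = monom 1 (Suc (Suc m)) - (\<Sum>j<Suc (Suc m). [:c j:] * monom 1 j)"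
  proof -
    have X: "[:0,1:] * p = pCons 0 p" for p :: "'a poly" by (simp add: mult_pCons_left)
    have m: "[:0,1:] * ([:a:] * monom 1 j) = [:a:] * monom 1 (Suc j)" for a :: 'a and j
      by (simp add: X monom_Suc)
    have "(\<Sum>j<Suc (Suc m). [:c j:] * monom 1 j) = [:c 0:] + (\<Sum>j<Suc m. [:c (Suc j):] * monom 1 (Suc j))"
      by (subst sum.lessThan_Suc_shift) simp
    moreover have "[:0,1:] * (\<Sum>j<Suc m. [:c (Suc j):] * monom 1 j) = (\<Sum>j<Suc m. [:c (Suc j):] * monom 1 (Suc j))"
      by (simp only: sum_distrib_left m)
    moreover have "[:0,1:] * monom 1 (Suc m) = (monom 1 (Suc (Suc m)) :: 'a poly)" by (simp add: X monom_Suc)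
    ultimately show ?thesis by (simp add: right_diff_distrib)
  qed
  finally show ?case unfolding A_def .
qed



lemma char_companion:
  assumes "k \<ge> 1"
  shows "char_poly (companion_A k R) = monom 1 k - (\<Sum>j<k. [:complex_of_real (coeff_b R (k - j)):] * monom 1 j)"
proof -
  obtain m where k: "k = Suc m" using assms by (cases k) auto
  have "char_poly_matrix (companion_A k R) = CM k (\<lambda>j. complex_of_real (coeff_a k R (j+1)))"
    by (rule eq_matI) (auto simp: char_poly_matrix_def companion_A_def CM_def)
  then have "char_poly (companion_A k R) = det (CM k (\<lambda>j. complex_of_real (coeff_a k R (j+1))))"
    by (simp add: char_poly_def)
  also have "\<dots> = monom 1 k - (\<Sum>j<k. [:complex_of_real (coeff_a k R (j+1)):] * monom 1 j)"
    unfolding k det_CM ..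
  also have "(\<Sum>j<k. [:complex_of_real (coeff_a k R (j+1)):] * monom 1 j) = (\<Sum>j<k. [:complex_of_real (coeff_b R (k - j)):] * monom 1 j)"
    by (simp add: coeff_a_def)
  finally show ?thesis .
qed

lemma char_prod:
  assumes "k \<ge> 1"
  shows "char_poly (companion_A k (power_sum k r)) = (\<Prod>j=1..k. [:- complex_of_real (r j), 1:])"
proof (rule poly_eqI)
  fix i
  have c: "coeff ([:a:] * monom 1 j) i = (if i = j then a else 0)" for a :: complex and j
    by (simp add: coeff_monom)
  have "coeff (char_poly (companion_A k (power_sum k r))) i =
     (if i = k then 1 else 0) - (if i < k then complex_of_real (coeff_b (power_sum k r) (k - i)) else 0)"
    unfolding char_companion[OF assms] coeff_diff coeff_sum c by (simp add: coeff_monom)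
  also have "\<dots> = (if i \<le> k then complex_of_real (fps_nth (Efps r {1..k}) (k - i)) else 0)"
    using E_coeff_b[of "k - i" r k] by (auto simp: Efps0)
  also have "\<dots> = coeff (\<Prod>j=1..k. [:- complex_of_real (r j), 1:]) i"
    by (rule P_link[symmetric])
  finally show "coeff (char_poly (companion_A k (power_sum k r))) i = coeff (\<Prod>j=1..k. [:- complex_of_real (r j), 1:]) i" .
qed

lemma order_lin: "order x [:- a, 1:] = (if x = a then 1 else 0)"
  using order_power_n_n[of a 1] by (auto intro: order_0I)

lemma order_prod_lin:
  "order x (\<Prod>j=1..k. [:- complex_of_real (r j), 1:]) = count (mset (map (\<lambda>j. complex_of_real (r j)) [1..<k+1])) x"
proof (induction k)
  case 0
  then show ?case using order_0I[of 1 x] by simp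
next
  case (Suc k)
  have nz: "(\<Prod>j=1..k. [:- complex_of_real (r j), 1:]) \<noteq> 0" by simp
  have "order x (\<Prod>j=1..Suc k. [:- complex_of_real (r j), 1:])
      = order x ((\<Prod>j=1..k. [:- complex_of_real (r j), 1:]) * [:- complex_of_real (r (Suc k)), 1:])"
    by (simp add: prod.cl_ivl_Suc)
  also have "\<dots> = order x (\<Prod>j=1..k. [:- complex_of_real (r j), 1:]) + order x [:- complex_of_real (r (Suc k)), 1:]"
  proof (rule order_mult)
    have l: "[:- complex_of_real (r (Suc k)), 1:] \<noteq> 0" by simp
    show "(\<Prod>j=1..k. [:- complex_of_real (r j), 1:]) * [:- complex_of_real (r (Suc k)), 1:] \<noteq> 0"
      using nz l mult_eq_0_iff by blast
  qed
  finally show ?case unfolding Suc.IH order_lin by simp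
qed

lemma eig_mset:
  assumes "k \<ge> 1"
  shows "eigenvalue_mset (companion_A k (power_sum k r)) = mset (map (\<lambda>j. complex_of_real (r j)) [1..<k+1])"
proof -
  have "(\<lambda>x. order x (char_poly (companion_A k (power_sum k r)))) = count (mset (map (\<lambda>j. complex_of_real (r j)) [1..<k+1]))"
    unfolding char_prod[OF assms] order_prod_lin ..
  then show ?thesis unfolding eigenvalue_mset_def by (simp add: count_inverse)
qed

lemma part2:
  assumes "k \<ge> 1"
    and dec: "\<And>i j. 1 \<le> i \<Longrightarrow> i \<le> j \<Longrightarrow> j \<le> k \<Longrightarrow> r j \<le> r i"
    and nonneg: "\<And>j. 1 \<le> j \<Longrightarrow> j \<le> k \<Longrightarrow> r j \<ge> 0"
    and j: "1 \<le> j" "j \<le> k"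
  shows "r j = jth_largest_eig_modulus (companion_A k (power_sum k r)) j"
proof -
  define xs where "xs = map r [1..<k+1]"
  have im: "image_mset cmod (eigenvalue_mset (companion_A k (power_sum k r))) = mset xs"
  proof -
    have m: "map (cmod \<circ> (\<lambda>j. complex_of_real (r j))) [1..<k+1] = map r [1..<k+1]"
      by (rule map_cong) (auto simp: nonneg)
    have "image_mset cmod (mset (map (\<lambda>j. complex_of_real (r j)) [1..<k+1])) = mset (map (cmod \<circ> (\<lambda>j. complex_of_real (r j))) [1..<k+1])"
      by (simp only: mset_map multiset.map_comp)
    then show ?thesis unfolding eig_mset[OF assms(1)] xs_def m .
  qed
  have srt: "sorted (rev xs)"
  proof -
    have rn: "rev xs ! i = r (k - i)" if "i < k" for i
      using that unfolding xs_def by (simp add: rev_nth nth_map_upt Suc_diff_Suc del: upt_Suc)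
    have lx: "length (rev xs) = k" by (simp add: xs_def)
    show ?thesis unfolding sorted_iff_nth_mono lx
      by (auto simp: rn intro!: dec)
  qed
  have "sort xs = rev xs" by (rule properties_for_sort) (use srt in auto)
  then have "eigen_moduli_desc (companion_A k (power_sum k r)) = xs"
    unfolding eigen_moduli_desc_def im by simp
  moreover have "xs ! (j - 1) = r j" unfolding xs_def using j
    by (simp add: nth_map_upt del: upt_Suc)
  ultimately show ?thesis unfolding jth_largest_eig_modulus_def by simp
qed



lemma coeff_b_cong:
  "(\<And>i. 1 \<le> i \<Longrightarrow> i \<le> n \<Longrightarrow> R i = R' i) \<Longrightarrow> coeff_b R n = coeff_b R' n"
proof (induction n rule: less_induct)
  case (less n)
  show ?case
  proof (cases n)
    case 0 then show ?thesis by simp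
  next
    case (Suc m)
    have IH: "coeff_b R (Suc m - i) = coeff_b R' (Suc m - i)" if "1 \<le> i" "i \<le> m" for i
      using less.IH[of "Suc m - i"] less.prems that Suc by auto
    have s: "(\<Sum>i\<in>{1..m}. R i * coeff_b R (Suc m - i)) = (\<Sum>i\<in>{1..m}. R' i * coeff_b R' (Suc m - i))"
      by (rule sum.cong) (use IH less.prems Suc in auto)
    show ?thesis unfolding Suc coeff_b.simps s using less.prems Suc by simp
  qed
qed

lemma companion_cong:
  assumes "\<And>i. 1 \<le> i \<Longrightarrow> i \<le> k \<Longrightarrow> R i = R' i"
  shows "companion_A k R = companion_A k R'"
  unfolding companion_A_def coeff_a_def
  by (rule eq_matI) (auto intro!: coeff_b_cong assms)

lemma inv_M2_correct:
  "1 \<le> n \<Longrightarrow> inv_M2 (moment_t R) n = R n"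
proof (induction n rule: less_induct)
  case (less n)
  define t where "t = moment_t R"
  obtain m where n: "n = Suc m" using less.prems by (cases n) auto
  show ?case
  proof (cases "m = 0")
    case True
    then show ?thesis unfolding n by simp
  next
    case False
    have IH: "inv_M2 t j = R j" if "1 \<le> j" "j \<le> m" for j
      using less.IH[of j] that unfolding n t_def by simp
    have tS: "t (Suc m) = (\<Sum>j\<in>{1..Suc m}. fact m / fact (Suc m - j) * 2 ^ (j - 1) * R j * t (Suc m - j))"
      unfolding t_def by simp
    have "t (Suc m) / (fact m * 2 ^ m) = (\<Sum>j\<in>{1..Suc m}. R j * t (Suc m - j) / (fact (Suc m - j) * 2 ^ (Suc m - j)))"
      unfolding tS sum_divide_distrib
    proof (rule sum.cong[OF refl])
      fix j assume j: "j \<in> {1..Suc m}"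
      have e: "(2::real) ^ m = 2 ^ (j - 1) * 2 ^ (Suc m - j)"
        using j by (simp flip: power_add)
      show "fact m / fact (Suc m - j) * 2 ^ (j - 1) * R j * t (Suc m - j) / (fact m * 2 ^ m) =
          R j * t (Suc m - j) / (fact (Suc m - j) * 2 ^ (Suc m - j))"
        unfolding e by (simp add: field_simps)
    qed
    also have "\<dots> = (\<Sum>j\<in>{1..m}. R j * t (Suc m - j) / (fact (Suc m - j) * 2 ^ (Suc m - j))) + R (Suc m)"
      by (simp add: t_def)
    finally have "R (Suc m) = t (Suc m) / (fact m * 2 ^ m) - (\<Sum>j\<in>{1..m}. t (Suc m - j) * inv_M2 t j / (fact (Suc m - j) * 2 ^ (Suc m - j)))"
      using IH by (simp add: mult.commute)
    then show ?thesis using False unfolding n t_def by simp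
  qed
qed


theorem proposition2:
  fixes k :: nat and r :: "nat \<Rightarrow> real"
  assumes "k \<ge> 1"
    and dec: "\<And>i j. 1 \<le> i \<Longrightarrow> i \<le> j \<Longrightarrow> j \<le> k \<Longrightarrow> r j \<le> r i"
    and nonneg: "\<And>j. 1 \<le> j \<Longrightarrow> j \<le> k \<Longrightarrow> r j \<ge> 0"
  shows "(\<forall>r'. (\<forall>i j. 1 \<le> i \<longrightarrow> i \<le> j \<longrightarrow> j \<le> k \<longrightarrow> r' j \<le> r' i)
              \<longrightarrow> (\<forall>j. 1 \<le> j \<longrightarrow> j \<le> k \<longrightarrow> r' j \<ge> 0)
              \<longrightarrow> (\<forall>\<tau>. 1 \<le> \<tau> \<longrightarrow> \<tau> \<le> k \<longrightarrow> power_sum k r' \<tau> = power_sum k r \<tau>)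
              \<longrightarrow> (\<forall>j. 1 \<le> j \<longrightarrow> j \<le> k \<longrightarrow> r' j = r j))
    \<and> (\<forall>j. 1 \<le> j \<longrightarrow> j \<le> k \<longrightarrow>
          r j = jth_largest_eig_modulus (companion_A k (power_sum k r)) j)
    \<and> (\<forall>\<tau>. 1 \<le> \<tau> \<longrightarrow> \<tau> \<le> k \<longrightarrow>
          power_sum k r \<tau> = inv_M2 (moment_t (power_sum k r)) \<tau>)"
proof (intro conjI allI impI)
  fix j assume j: "1 \<le> j" "j \<le> k"
  show "r j = jth_largest_eig_modulus (companion_A k (power_sum k r)) j"
    by (rule part2[OF assms j])
next
  fix \<tau> :: nat assume "1 \<le> \<tau>"
  then show "power_sum k r \<tau> = inv_M2 (moment_t (power_sum k r)) \<tau>"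
    by (simp add: inv_M2_correct)
next
  fix r' :: "nat \<Rightarrow> real" and j
  assume d': "\<forall>i j. 1 \<le> i \<longrightarrow> i \<le> j \<longrightarrow> j \<le> k \<longrightarrow> r' j \<le> r' i"
    and n': "\<forall>j. 1 \<le> j \<longrightarrow> j \<le> k \<longrightarrow> r' j \<ge> 0"
    and p': "\<forall>\<tau>. 1 \<le> \<tau> \<longrightarrow> \<tau> \<le> k \<longrightarrow> power_sum k r' \<tau> = power_sum k r \<tau>"
    and j: "1 \<le> j" "j \<le> k"
  have "r' j = jth_largest_eig_modulus (companion_A k (power_sum k r')) j"
    by (rule part2[OF assms(1) _ _ j]) (use d' n' in auto)
  also have "companion_A k (power_sum k r') = companion_A k (power_sum k r)"
    by (rule companion_cong) (use p' in auto)
  also have "jth_largest_eig_modulus (companion_A k (power_sum k r)) j = r j"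
    by (rule part2[OF assms j, symmetric])
  finally show "r' j = r j" .
qed

end
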